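(* In the VI setting below, let $u\in\mathbb{R}^n$ and $y=S(u)$, $q=u-Ay$. Then $S$ is (Fréchet) differentiable at $u$ if and only if $\mathcal K(y)=\{v\in\mathbb{R}^n: v_i=0 \text{ whenever } y_i=0\}$.
   Context: VI setting: $A\in\mathbb{R}^{n\times n}$ symmetric positive definite, $\|v\|_1=\sum_i|v_i|$. For $u\in\mathbb{R}^n$, $S(u)=y$ is the unique solution of $\langle Ay,v-y\rangle+\|v\|_1-\|y\|_1\ge\langle u,v-y\rangle$ for all $v\in\mathbb{R}^n$; equivalently there is $q\in\mathbb{R}^n$ with $Ay+q=u$, $y_iq_i=|y_i|$, $|q_i|\le1$ ($i=1,\dots,n$), and then $q=u-Ay$. Define $\mathcal K(y):=\{v\in\mathbb{R}^n: v_i=0 \text{ if } |q_i|<1;\ v_iq_i\ge0 \text{ if } y_i=0 \text{ and } |q_i|=1\}$. Known facts: $S$ is globally Lipschitz and directionally differentiable, and $\eta=S'(u;h)$ is the unique solution of $\eta\in\mathcal K(y)$, $\langle A\eta,v-\eta\rangle\ge\langle h,v-\eta\rangle$ for all $v\in\mathcal K(y)$. *)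

theory Defs
  imports "HOL-Analysis.Analysis"
begin

definition l1norm :: "real ^ 'n \<Rightarrow> real" where
  "l1norm v = (\<Sum>i\<in>UNIV. \<bar>v $ i\<bar>)"

definition spd :: "real ^ 'n ^ 'n \<Rightarrow> bool" where
  "spd A \<longleftrightarrow> transpose A = A \<and> (\<forall>x. x \<noteq> 0 \<longrightarrow> x \<bullet> (A *v x) > 0)"

definition vi_sol :: "real ^ 'n ^ 'n \<Rightarrow> real ^ 'n \<Rightarrow> real ^ 'n \<Rightarrow> bool" where
  "vi_sol A u y \<longleftrightarrow>
     (\<forall>v. (A *v y) \<bullet> (v - y) + l1norm v - l1norm y \<ge> u \<bullet> (v - y))"

text \<open>The solution operator S (the VI has a unique solution when A is SPD).\<close>
definition solop :: "real ^ 'n ^ 'n \<Rightarrow> real ^ 'n \<Rightarrow> real ^ 'n" where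
  "solop A u = (THE y. vi_sol A u y)"

text \<open>The critical cone K(y), with q = u - A y.\<close>
definition critcone :: "real ^ 'n \<Rightarrow> real ^ 'n \<Rightarrow> (real ^ 'n) set" where
  "critcone y q = {v. \<forall>i. (\<bar>q $ i\<bar> < 1 \<longrightarrow> v $ i = 0) \<and>
                          (y $ i = 0 \<and> \<bar>q $ i\<bar> = 1 \<longrightarrow> v $ i * q $ i \<ge> 0)}"

end

theory Submission
  imports Defs
begin


lemma l1_axis: "l1norm (y + axis i t) = l1norm y - \<bar>y$i\<bar> + \<bar>y$i + t\<bar>"
proof -
  have "l1norm (y + axis i t) = \<bar>y$i + t\<bar> + (\<Sum>j\<in>UNIV-{i}. \<bar>(y + axis i t)$j\<bar>)"
    unfolding l1norm_def by (subst sum.remove[of _ i]) (auto simp: axis_def)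
  also have "(\<Sum>j\<in>UNIV-{i}. \<bar>(y + axis i t)$j\<bar>) = (\<Sum>j\<in>UNIV-{i}. \<bar>y$j\<bar>)"
    by (rule sum.cong) (auto simp: axis_def)
  also have "l1norm y = \<bar>y$i\<bar> + (\<Sum>j\<in>UNIV-{i}. \<bar>y$j\<bar>)"
    unfolding l1norm_def by (subst sum.remove[of _ i]) auto
  ultimately show ?thesis by simp
qed

lemma inner_axis': "q \<bullet> axis i t = q$i * t"
  by (simp add: inner_axis)

lemma vi_char:
  "vi_sol A u y \<longleftrightarrow> (\<forall>i. \<bar>(u - A *v y)$i\<bar> \<le> 1 \<and> y$i * (u - A *v y)$i = \<bar>y$i\<bar>)"
proof
  assume V: "vi_sol A u y"
  define q where "q = u - A *v y"
  have key: "q \<bullet> (v - y) \<le> l1norm v - l1norm y" for v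
  proof -
    have "u \<bullet> (v - y) \<le> (A *v y) \<bullet> (v - y) + l1norm v - l1norm y"
      using V unfolding vi_sol_def by blast
    moreover have "q \<bullet> (v - y) = u \<bullet> (v - y) - (A *v y) \<bullet> (v - y)"
      unfolding q_def by (rule inner_diff_left)
    ultimately show ?thesis by linarith
  qed
  show "\<forall>i. \<bar>(u - A *v y)$i\<bar> \<le> 1 \<and> y$i * (u - A *v y)$i = \<bar>y$i\<bar>"
  proof
    fix i
    have k: "q$i * t \<le> \<bar>y$i + t\<bar> - \<bar>y$i\<bar>" for t
      using key[of "y + axis i t"] by (simp add: l1_axis inner_axis')
    have "q$i \<le> 1" using k[of 1] by linarith
    moreover have "- q$i \<le> 1" using k[of "-1"] by linarith
    moreover have "- q$i * y$i \<le> - \<bar>y$i\<bar>" using k[of "- y$i"] by (simp add: mult.commute)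
    ultimately have a: "\<bar>q$i\<bar> \<le> 1" "q$i * y$i \<ge> \<bar>y$i\<bar>" by auto
    have "\<bar>q$i * y$i\<bar> \<le> \<bar>y$i\<bar>" using a(1) by (simp add: abs_mult mult_left_le_one_le)
    then have "y$i * q$i = \<bar>y$i\<bar>" using a(2) by (simp add: mult.commute)
    note a(1) this
    then show "\<bar>(u - A *v y)$i\<bar> \<le> 1 \<and> y$i * (u - A *v y)$i = \<bar>y$i\<bar>" by (simp add: q_def)
  qed
next
  assume C: "\<forall>i. \<bar>(u - A *v y)$i\<bar> \<le> 1 \<and> y$i * (u - A *v y)$i = \<bar>y$i\<bar>"
  define q where "q = u - A *v y"
  have "q \<bullet> v \<le> l1norm v" for v
  proof -
    have "q \<bullet> v = (\<Sum>i\<in>UNIV. q$i * v$i)" by (simp add: inner_vec_def)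
    also have "\<dots> \<le> (\<Sum>i\<in>UNIV. \<bar>v$i\<bar>)"
    proof (rule sum_mono)
      fix i
      have "\<bar>q$i\<bar> \<le> 1" using C q_def by auto
      then have "\<bar>q$i * v$i\<bar> \<le> \<bar>v$i\<bar>" by (simp add: abs_mult mult_left_le_one_le)
      then show "q$i * v$i \<le> \<bar>v$i\<bar>" by linarith
    qed
    finally show ?thesis by (simp add: l1norm_def)
  qed
  moreover have "q \<bullet> y = l1norm y"
    using C by (simp add: inner_vec_def l1norm_def q_def mult.commute)
  ultimately have h1: "q \<bullet> (v - y) \<le> l1norm v - l1norm y" for v
    by (simp add: inner_diff_right)
  have h2: "q \<bullet> (v - y) = u \<bullet> (v - y) - (A *v y) \<bullet> (v - y)" for v
    unfolding q_def by (rule inner_diff_left)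
  have "u \<bullet> (v - y) \<le> (A *v y) \<bullet> (v - y) + l1norm v - l1norm y" for v
    using h1[of v] h2[of v] by linarith
  then show "vi_sol A u y"
    unfolding vi_sol_def by blast
qed



lemma quad_scale: fixes A :: "real^'n^'n" shows "(a *\<^sub>R z) \<bullet> (A *v (a *\<^sub>R z)) = a * a * (z \<bullet> (A *v z))"
proof -
  have "A *v (a *\<^sub>R z) = a *\<^sub>R (A *v z)" by (rule matrix_vector_mult_scaleR)
  then show ?thesis by simp
qed

lemma cont_quad: fixes A :: "real^'n^'n" shows "continuous_on S (\<lambda>x. x \<bullet> (A *v x))"
  by (intro continuous_on_inner continuous_on_id matrix_vector_mult_linear_continuous_on)

lemma spd_coercive:
  assumes "spd A"
  shows "\<exists>c>0. \<forall>x. c * (norm x)^2 \<le> x \<bullet> (A *v x)"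
proof -
  have pd: "x \<noteq> 0 \<Longrightarrow> x \<bullet> (A *v x) > 0" for x using assms by (simp add: spd_def)
  obtain i :: 'a where True by blast
  have "(axis i 1 :: real^'a) \<in> sphere 0 1" using norm_axis_1[of i] by (simp add: sphere_def)
  then have ne: "sphere (0::real^'a) 1 \<noteq> {}" by blast
  obtain x0 where x0: "x0 \<in> sphere 0 1" "\<And>z. z \<in> sphere 0 1 \<Longrightarrow> x0 \<bullet> (A *v x0) \<le> z \<bullet> (A *v z)"
    using continuous_attains_inf[OF compact_sphere ne cont_quad] by blast
  have x0nz: "x0 \<noteq> 0" using x0(1) by auto
  define c where "c = x0 \<bullet> (A *v x0)"
  have cpos: "c > 0" using pd[OF x0nz] c_def by simp
  have "c * (norm x)^2 \<le> x \<bullet> (A *v x)" for x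
  proof (cases "x = 0")
    case True then show ?thesis by simp
  next
    case False
    define z where "z = (1 / norm x) *\<^sub>R x"
    have zs: "z \<in> sphere 0 1" using False by (simp add: z_def)
    have xz: "x = norm x *\<^sub>R z" using False by (simp add: z_def)
    have "x \<bullet> (A *v x) = norm x * norm x * (z \<bullet> (A *v z))"
      by (subst xz, subst xz) (rule quad_scale)
    moreover have "c \<le> z \<bullet> (A *v z)" using x0(2)[OF zs] c_def by simp
    moreover have "0 \<le> norm x * norm x" by simp
    ultimately show ?thesis
      by (metis mult.commute mult_left_mono power2_eq_square)
  qed
  then show ?thesis using cpos by blast
qed

lemma vi_mono:
  assumes "vi_sol A u1 y1" "vi_sol A u2 y2"
  shows "(y1 - y2) \<bullet> (A *v (y1 - y2)) \<le> (u1 - u2) \<bullet> (y1 - y2)"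
proof -
  have a: "u1 \<bullet> (y2 - y1) \<le> (A *v y1) \<bullet> (y2 - y1) + l1norm y2 - l1norm y1"
    using assms(1) unfolding vi_sol_def by blast
  have b: "u2 \<bullet> (y1 - y2) \<le> (A *v y2) \<bullet> (y1 - y2) + l1norm y1 - l1norm y2"
    using assms(2) unfolding vi_sol_def by blast
  have e1: "(y1 - y2) \<bullet> (A *v (y1 - y2)) = - ((A *v y1) \<bullet> (y2 - y1) + (A *v y2) \<bullet> (y1 - y2))"
    by (simp add: matrix_vector_mult_diff_distrib inner_diff_left inner_diff_right inner_commute)
  have e2: "(u1 - u2) \<bullet> (y1 - y2) = - (u1 \<bullet> (y2 - y1) + u2 \<bullet> (y1 - y2))"
    by (simp add: inner_diff_left inner_diff_right inner_commute)
  show ?thesis using a b e1 e2 by linarith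
qed

lemma vi_lip:
  assumes "spd A"
  shows "\<exists>c>0. \<forall>u1 u2 y1 y2. vi_sol A u1 y1 \<longrightarrow> vi_sol A u2 y2 \<longrightarrow> c * norm (y1 - y2) \<le> norm (u1 - u2)"
proof -
  obtain c where c: "c > 0" "\<And>x. c * (norm x)^2 \<le> x \<bullet> (A *v x)" using spd_coercive[OF assms] by blast
  have "c * norm (y1 - y2) \<le> norm (u1 - u2)" if "vi_sol A u1 y1" "vi_sol A u2 y2" for u1 u2 y1 y2
  proof -
    have "c * norm (y1 - y2) * norm (y1 - y2) \<le> (u1 - u2) \<bullet> (y1 - y2)"
      using c(2)[of "y1 - y2"] vi_mono[OF that] by (simp add: power2_eq_square mult.assoc)
    also have "\<dots> \<le> norm (u1 - u2) * norm (y1 - y2)" by (rule norm_cauchy_schwarz)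
    finally have h: "c * norm (y1 - y2) * norm (y1 - y2) \<le> norm (u1 - u2) * norm (y1 - y2)" .
    show ?thesis
    proof (cases "norm (y1 - y2) = 0")
      case True then show ?thesis by simp
    next
      case False then have "norm (y1 - y2) > 0" by simp
      then show ?thesis using h by (simp add: mult_le_cancel_right)
    qed
  qed
  then show ?thesis using c(1) by blast
qed



lemma spd_sym: fixes A :: "real^'n^'n" assumes "spd A"
  shows "(A *v x) \<bullet> y = x \<bullet> (A *v y)"
proof -
  have "A *v x = x v* A" using assms transpose_matrix_vector[of A x] by (simp add: spd_def)
  then show ?thesis by (simp add: dot_lmul_matrix)
qed

lemma quad_expand: fixes A :: "real^'n^'n" assumes "spd A"
  shows "(y + t *\<^sub>R w) \<bullet> (A *v (y + t *\<^sub>R w)) = y \<bullet> (A *v y) + 2 * t * ((A *v y) \<bullet> w) + t * t * (w \<bullet> (A *v w))"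
proof -
  have s: "w \<bullet> (A *v y) = (A *v y) \<bullet> w" by (simp add: inner_commute)
  have s2: "y \<bullet> (A *v w) = (A *v y) \<bullet> w" using spd_sym[OF assms] by simp
  show ?thesis
    by (simp add: vec.add matrix_vector_mult_scaleR inner_add_left inner_add_right s s2 algebra_simps)
qed

lemma l1_nonneg: "l1norm v \<ge> 0" unfolding l1norm_def by (simp add: sum_nonneg)

lemma l1_convex: assumes "0 \<le> t" "t \<le> 1"
  shows "l1norm (y + t *\<^sub>R (v - y)) \<le> (1 - t) * l1norm y + t * l1norm v"
proof -
  have "l1norm (y + t *\<^sub>R (v - y)) = (\<Sum>i\<in>UNIV. \<bar>(1 - t) * y$i + t * v$i\<bar>)"
    unfolding l1norm_def by (intro sum.cong) (auto simp: algebra_simps)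
  also have "\<dots> \<le> (\<Sum>i\<in>UNIV. (1 - t) * \<bar>y$i\<bar> + t * \<bar>v$i\<bar>)"
  proof (rule sum_mono)
    fix i
    have "\<bar>(1 - t) * y$i + t * v$i\<bar> \<le> \<bar>(1 - t) * y$i\<bar> + \<bar>t * v$i\<bar>" by (rule abs_triangle_ineq)
    also have "\<dots> = (1 - t) * \<bar>y$i\<bar> + t * \<bar>v$i\<bar>" using assms by (simp add: abs_mult)
    finally show "\<bar>(1 - t) * y$i + t * v$i\<bar> \<le> (1 - t) * \<bar>y$i\<bar> + t * \<bar>v$i\<bar>" .
  qed
  also have "\<dots> = (1 - t) * l1norm y + t * l1norm v"
    unfolding l1norm_def by (simp add: sum.distrib sum_distrib_left)
  finally show ?thesis .
qed

lemma cont_l1: "continuous_on S l1norm"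
  unfolding l1norm_def[abs_def]
  by (intro continuous_intros continuous_on_component continuous_on_id)

lemma vi_exists:
  fixes A :: "real^'n^'n"
  assumes "spd A"
  shows "\<exists>y. vi_sol A u y"
proof -
  obtain c where c: "c > 0" "\<And>x. c * (norm x)^2 \<le> x \<bullet> (A *v x)" using spd_coercive[OF assms] by blast
  define f where "f y = (y \<bullet> (A *v y)) / 2 + l1norm y - u \<bullet> y" for y
  define R where "R = 2 * norm u / c"
  have contf: "continuous_on (cball 0 R) f"
    unfolding f_def by (intro continuous_intros cont_quad cont_l1) auto
  have R0: "R \<ge> 0" using c(1) by (simp add: R_def)
  have ne: "cball (0::real^'n) R \<noteq> {}" using R0 by simp
  obtain y0 where y0: "y0 \<in> cball 0 R" "\<And>z. z \<in> cball 0 R \<Longrightarrow> f y0 \<le> f z"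
    using continuous_attains_inf[OF compact_cball ne contf] by blast
  have f0: "f 0 = 0" by (simp add: f_def l1norm_def)
  have fmin: "f y0 \<le> f z" for z
  proof (cases "z \<in> cball 0 R")
    case True then show ?thesis using y0 by blast
  next
    case False
    then have nz: "norm z > R" by (simp add: dist_norm)
    have "u \<bullet> z \<le> norm u * norm z" by (rule norm_cauchy_schwarz)
    moreover have "c * (norm z)^2 \<le> z \<bullet> (A *v z)" by (rule c(2))
    moreover have "l1norm z \<ge> 0" by (rule l1_nonneg)
    ultimately have "f z \<ge> norm z * (c * norm z / 2 - norm u)"
      by (simp add: f_def power2_eq_square algebra_simps)
    moreover have "c * norm z / 2 - norm u \<ge> 0"
    proof -
      have "c * R / 2 = norm u" using c(1) by (simp add: R_def)
      moreover have "c * R \<le> c * norm z" using nz c(1) by simp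
      ultimately show ?thesis by linarith
    qed
    ultimately have "f z \<ge> 0" by (smt (verit) mult_nonneg_nonneg norm_ge_zero)
    moreover have "f y0 \<le> f 0" using y0(2)[of 0] R0 by simp
    ultimately show ?thesis using f0 by linarith
  qed
  have "u \<bullet> (v - y0) \<le> (A *v y0) \<bullet> (v - y0) + l1norm v - l1norm y0" for v
  proof -
    define w where "w = v - y0"
    define g where "g = (A *v y0) \<bullet> w + l1norm v - l1norm y0 - u \<bullet> w"
    have step: "0 \<le> g + t / 2 * (w \<bullet> (A *v w))" if t: "0 < t" "t \<le> 1" for t
    proof -
      have aux: "\<And>(fa::real) (fb::real) (Q::real) (X::real) (L::real) (U::real) (W::real) (M::real) (l::real). fa \<le> fb \<Longrightarrow> fb = (Q + X) / 2 + L - U - W \<Longrightarrow> L \<le> M \<Longrightarrow> fa = Q / 2 + l - U \<Longrightarrow> 0 \<le> X / 2 + M - l - W"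
        by (auto simp: field_simps)
      have a: "f y0 \<le> f (y0 + t *\<^sub>R w)" by (rule fmin)
      have b: "f (y0 + t *\<^sub>R w) = (y0 \<bullet> (A *v y0) + 2 * t * ((A *v y0) \<bullet> w) + t * t * (w \<bullet> (A *v w))) / 2
          + l1norm (y0 + t *\<^sub>R w) - u \<bullet> y0 - t * (u \<bullet> w)"
        unfolding f_def quad_expand[OF assms] by (simp add: inner_add_right)
      have c: "l1norm (y0 + t *\<^sub>R w) \<le> (1 - t) * l1norm y0 + t * l1norm v"
        unfolding w_def using l1_convex[of t y0 v] t by simp
      have d: "f y0 = y0 \<bullet> (A *v y0) / 2 + l1norm y0 - u \<bullet> y0" by (simp add: f_def)
      have "0 \<le> (2 * t * ((A *v y0) \<bullet> w) + t * t * (w \<bullet> (A *v w))) / 2 + ((1 - t) * l1norm y0 + t * l1norm v) - l1norm y0 - t * (u \<bullet> w)"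
        using aux[OF a _ c d] b by (simp add: add.assoc)
      also have "\<dots> = t * (g + t / 2 * (w \<bullet> (A *v w)))" by (simp add: g_def algebra_simps)
      finally have "0 \<le> t * (g + t / 2 * (w \<bullet> (A *v w)))" .
      then show ?thesis using t(1) by (simp add: zero_le_mult_iff)
    qed
    have "g \<ge> 0"
    proof (rule ccontr)
      assume "\<not> g \<ge> 0"
      then have gneg: "g < 0" by simp
      define M where "M = \<bar>w \<bullet> (A *v w)\<bar> + 1"
      have Mpos: "M > 0" by (simp add: M_def)
      define t where "t = min 1 (- g / M)"
      have t: "0 < t" "t \<le> 1" using gneg Mpos by (auto simp: t_def divide_neg_pos)
      have "t * M \<le> - g" using Mpos by (simp add: t_def min_def field_simps)
      moreover have "t / 2 * (w \<bullet> (A *v w)) \<le> t * M / 2"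
        using t(1) by (simp add: M_def mult_left_mono)
      ultimately have "g + t / 2 * (w \<bullet> (A *v w)) < 0" using gneg by linarith
      then show False using step[OF t] by linarith
    qed
    then show ?thesis by (simp add: g_def w_def)
  qed
  then show ?thesis unfolding vi_sol_def by blast
qed



lemma solop_sol: fixes A :: "real^'n^'n" assumes "spd A" shows "vi_sol A u (solop A u)"
proof -
  obtain c where c: "c > 0" "\<And>u1 u2 y1 y2. vi_sol A u1 y1 \<Longrightarrow> vi_sol A u2 y2 \<Longrightarrow> c * norm (y1 - y2) \<le> norm (u1 - u2)"
    using vi_lip[OF assms] by blast
  obtain y where y: "vi_sol A u y" using vi_exists[OF assms] by blast
  have "\<exists>!y. vi_sol A u y"
  proof (rule ex1I[where a=y])
    show "vi_sol A u y" by (rule y)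
    fix z assume "vi_sol A u z"
    from c(2)[OF this y] c(1) show "z = y" by (simp add: mult_le_0_iff)
  qed
  then show ?thesis unfolding solop_def by (rule theI')
qed

lemma solop_eq: fixes A :: "real^'n^'n" assumes "spd A" "vi_sol A u y" shows "solop A u = y"
proof -
  obtain c where c: "c > 0" "\<And>u1 u2 y1 y2. vi_sol A u1 y1 \<Longrightarrow> vi_sol A u2 y2 \<Longrightarrow> c * norm (y1 - y2) \<le> norm (u1 - u2)"
    using vi_lip[OF assms(1)] by blast
  from c(2)[OF solop_sol[OF assms(1), of u] assms(2)] c(1) show ?thesis by (simp add: mult_le_0_iff)
qed

lemma solop_char: fixes A :: "real^'n^'n" assumes "spd A"
  shows "\<bar>(u - A *v solop A u)$i\<bar> \<le> 1" "solop A u $ i * (u - A *v solop A u)$i = \<bar>solop A u $ i\<bar>"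
  using solop_sol[OF assms, of u] unfolding vi_char by auto

lemma solop_tendsto: fixes A :: "real^'n^'n" assumes "spd A"
  shows "(solop A \<longlongrightarrow> solop A u) (nhds u)"
proof -
  obtain c where c: "c > 0" "\<And>u1 u2 y1 y2. vi_sol A u1 y1 \<Longrightarrow> vi_sol A u2 y2 \<Longrightarrow> c * norm (y1 - y2) \<le> norm (u1 - u2)"
    using vi_lip[OF assms(1)] by blast
  have L: "c * norm (solop A x - solop A u) \<le> norm (x - u)" for x
    using c(2)[OF solop_sol[OF assms] solop_sol[OF assms]] .
  show ?thesis
    unfolding tendsto_iff eventually_nhds_metric
  proof (intro allI impI)
    fix e :: real assume e: "e > 0"
    have "dist (solop A x) (solop A u) < e" if "dist x u < c * e" for x
    proof -
      have "c * dist (solop A x) (solop A u) < c * e" using L[of x] that by (simp add: dist_norm)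
      then show ?thesis using c(1) by simp
    qed
    then show "\<exists>d>0. \<forall>x. dist x u < d \<longrightarrow> dist (solop A x) (solop A u) < e"
      using c(1) e by (intro exI[of _ "c * e"]) auto
  qed
qed

lemma sgn_q1: fixes a b :: real assumes "a * b = \<bar>a\<bar>" "a > 0" shows "b = 1"
proof -
  have "a * (b - 1) = 0" using assms by (simp add: algebra_simps)
  then show ?thesis using assms(2) by simp
qed

lemma sgn_q2: fixes a b :: real assumes "a * b = \<bar>a\<bar>" "a < 0" shows "b = -1"
proof -
  have "a * (b + 1) = 0" using assms by (simp add: algebra_simps)
  then show ?thesis using assms(2) by simp
qed



lemma cone_iff:
  fixes y q :: "real^'n"
  assumes ch: "\<And>i. \<bar>q$i\<bar> \<le> 1" "\<And>i. y$i * q$i = \<bar>y$i\<bar>"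
  shows "critcone y q = {v. \<forall>i. y$i = 0 \<longrightarrow> v$i = 0} \<longleftrightarrow> (\<forall>i. y$i = 0 \<longrightarrow> \<bar>q$i\<bar> < 1)"
proof
  assume eq: "critcone y q = {v. \<forall>i. y$i = 0 \<longrightarrow> v$i = 0}"
  show "\<forall>i. y$i = 0 \<longrightarrow> \<bar>q$i\<bar> < 1"
  proof (intro allI impI)
    fix i assume yi: "y$i = 0"
    show "\<bar>q$i\<bar> < 1"
    proof (rule ccontr)
    assume nq: "\<not> \<bar>q$i\<bar> < 1"
    then have q1: "\<bar>q$i\<bar> = 1" using ch(1)[of i] by simp
    have "axis i (q$i) \<in> critcone y q"
    proof -
      have "(\<bar>q $ j\<bar> < 1 \<longrightarrow> axis i (q$i) $ j = 0) \<and> (y $ j = 0 \<and> \<bar>q $ j\<bar> = 1 \<longrightarrow> axis i (q$i) $ j * q $ j \<ge> 0)" for j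
      proof (cases "j = i")
        case True then show ?thesis using q1 by (simp add: axis_def)
      next
        case False then show ?thesis by (simp add: axis_def)
      qed
      then show ?thesis unfolding critcone_def by blast
    qed
    then have "axis i (q$i) $ i = 0" using eq yi by auto
    then show False using q1 by (simp add: axis_def)
    qed
  qed
next
  assume sc: "\<forall>i. y$i = 0 \<longrightarrow> \<bar>q$i\<bar> < 1"
  have nz: "y$i \<noteq> 0 \<Longrightarrow> \<bar>q$i\<bar> = 1" for i
  proof -
    assume "y$i \<noteq> 0"
    have "\<bar>y$i\<bar> * \<bar>q$i\<bar> = \<bar>y$i\<bar>" using ch(2)[of i] abs_mult[of "y$i" "q$i"] by simp
    then show ?thesis using \<open>y$i \<noteq> 0\<close> by simp
  qed
  show "critcone y q = {v. \<forall>i. y$i = 0 \<longrightarrow> v$i = 0}"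
  proof (intro set_eqI iffI)
    fix v :: "real^'n" assume "v \<in> critcone y q"
    then show "v \<in> {v. \<forall>i. y$i = 0 \<longrightarrow> v$i = 0}" using sc unfolding critcone_def by auto
  next
    fix v :: "real^'n" assume v: "v \<in> {v. \<forall>i. y$i = 0 \<longrightarrow> v$i = 0}"
    have "(\<bar>q $ i\<bar> < 1 \<longrightarrow> v $ i = 0) \<and> (y $ i = 0 \<and> \<bar>q $ i\<bar> = 1 \<longrightarrow> v $ i * q $ i \<ge> 0)" for i
    proof (cases "y$i = 0")
      case True then show ?thesis using v sc by auto
    next
      case False then show ?thesis using nz[OF False] by auto
    qed
    then show "v \<in> critcone y q" unfolding critcone_def by blast
  qed
qed



lemma diff_imp_sc:
  fixes A :: "real^'n^'n" and u :: "real^'n"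
  assumes spd: "spd A" and dif: "solop A differentiable (at u)" and yi: "solop A u $ i = 0"
  shows "\<bar>(u - A *v solop A u)$i\<bar> < 1"
proof (rule ccontr)
  assume nq: "\<not> \<bar>(u - A *v solop A u)$i\<bar> < 1"
  define S where "S = solop A"
  define y where "y = S u"
  define q where "q = u - A *v y"
  have q1: "\<bar>q$i\<bar> = 1" using nq solop_char(1)[OF spd, of u i] by (simp add: q_def y_def S_def)
  define \<sigma> where "\<sigma> = q$i"
  define e :: "real^'n" where "e = axis i \<sigma>"
  have ec: "e$j = (if j = i then \<sigma> else 0)" for j by (simp add: e_def axis_def)
  have "e = \<sigma> *\<^sub>R axis i 1" by (simp add: e_def vec_eq_iff axis_def)
  then have ne: "norm e = 1" using q1 by (simp add: norm_axis_1 \<sigma>_def)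
  have yi': "y$i = 0" using yi by (simp add: y_def S_def)
  have left: "S (u - t *\<^sub>R e) = y" if t: "0 \<le> t" "t \<le> 1" for t
    unfolding S_def
  proof (rule solop_eq[OF spd], unfold vi_char, intro allI conjI)
    fix j
    have comp: "(u - t *\<^sub>R e - A *v y)$j = q$j - t * e$j" by (simp add: q_def)
    show "\<bar>(u - t *\<^sub>R e - A *v y)$j\<bar> \<le> 1"
    proof (cases "j = i")
      case True
      then have "(u - t *\<^sub>R e - A *v y)$j = \<sigma> * (1 - t)" using comp ec by (simp add: \<sigma>_def algebra_simps)
      then show ?thesis using q1 t by (simp add: abs_mult \<sigma>_def)
    next
      case False
      then show ?thesis using comp ec solop_char(1)[OF spd, of u j] by (simp add: q_def y_def S_def)
    qed
    show "y$j * (u - t *\<^sub>R e - A *v y)$j = \<bar>y$j\<bar>"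
    proof (cases "j = i")
      case True then show ?thesis using yi' by simp
    next
      case False
      then show ?thesis using comp ec solop_char(2)[OF spd, of u j] by (simp add: q_def y_def S_def)
    qed
  qed
  have right: "t \<le> norm (A *v (S (u + t *\<^sub>R e) - y))" if t: "0 < t" for t
  proof -
    define y' where "y' = S (u + t *\<^sub>R e)"
    define r where "r = (A *v (y' - y))$i"
    have c1: "\<bar>(u + t *\<^sub>R e - A *v y')$i\<bar> \<le> 1" using solop_char(1)[OF spd, of "u + t *\<^sub>R e" i]
      by (simp add: y'_def S_def)
    have "(u + t *\<^sub>R e - A *v y')$i = \<sigma> + t * \<sigma> - r"
      using ec[of i] by (simp add: r_def matrix_vector_mult_diff_distrib q_def \<sigma>_def)
    with c1 have c2: "\<bar>\<sigma> + t * \<sigma> - r\<bar> \<le> 1" by simp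
    have "t \<le> \<bar>r\<bar>"
    proof (cases "\<sigma> = 1")
      case True then show ?thesis using c2 by simp
    next
      case False then have "\<sigma> = -1" using q1 by (auto simp: \<sigma>_def abs_if split: if_splits)
      then show ?thesis using c2 by simp
    qed
    also have "\<bar>r\<bar> \<le> norm (A *v (y' - y))" unfolding r_def by (rule component_le_norm_cart)
    finally show ?thesis by (simp add: y'_def)
  qed
  obtain K where K: "K > 0" "\<And>x. norm (A *v x) \<le> norm x * K"
    using bounded_linear.pos_bounded[OF matrix_vector_mul_bounded_linear[of A]] by blast
  obtain D where D: "(S has_derivative D) (at u)" using dif unfolding S_def differentiable_def by blast
  have bl: "bounded_linear D" and eps: "\<And>e. e > 0 \<Longrightarrow> \<exists>d>0. \<forall>z. norm (z - u) < d \<longrightarrow> norm (S z - S u - D (z - u)) \<le> e * norm (z - u)"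
    using D unfolding has_derivative_at_alt by blast+
  define \<epsilon> where "\<epsilon> = 1 / (4 * K)"
  have epos: "\<epsilon> > 0" using K by (simp add: \<epsilon>_def)
  obtain d where d: "d > 0" "\<And>z. norm (z - u) < d \<Longrightarrow> norm (S z - S u - D (z - u)) \<le> \<epsilon> * norm (z - u)"
    using eps[OF epos] by blast
  define t where "t = min 1 (d / 2)"
  have t: "0 < t" "t \<le> 1" "t < d" using d(1) by (auto simp: t_def)
  have nt: "norm (t *\<^sub>R e) = t" using ne t by simp
  have Dm: "D (- (t *\<^sub>R e)) = - (t *\<^sub>R D e)" "D (t *\<^sub>R e) = t *\<^sub>R D e"
    using bounded_linear.linear[OF bl] by (simp_all add: linear_cmul linear_neg)
  have h1: "norm (S (u - t *\<^sub>R e) - S u - D (- (t *\<^sub>R e))) \<le> \<epsilon> * t"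
    using d(2)[of "u - t *\<^sub>R e"] t nt by simp
  then have h1': "norm (t *\<^sub>R D e) \<le> \<epsilon> * t" using left[of t] t Dm by (simp add: y_def)
  have h2: "norm (S (u + t *\<^sub>R e) - y - t *\<^sub>R D e) \<le> \<epsilon> * t"
    using d(2)[of "u + t *\<^sub>R e"] t nt Dm by (simp add: y_def)
  have "norm (S (u + t *\<^sub>R e) - y) \<le> norm (S (u + t *\<^sub>R e) - y - t *\<^sub>R D e) + norm (t *\<^sub>R D e)"
    using norm_triangle_sub[of "S (u + t *\<^sub>R e) - y" "t *\<^sub>R D e"] by linarith
  with h1' h2 have h3: "norm (S (u + t *\<^sub>R e) - y) \<le> 2 * \<epsilon> * t" by linarith
  have "t \<le> norm (S (u + t *\<^sub>R e) - y) * K" using right[OF t(1)] K(2) order_trans by blast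
  also have "\<dots> \<le> 2 * \<epsilon> * t * K" using h3 K(1) by (simp add: mult_right_mono)
  also have "\<dots> = t / 2" using K(1) by (simp add: \<epsilon>_def)
  finally show False using t(1) by simp
qed



lemma sc_imp_diff:
  fixes A :: "real^'n^'n" and u :: "real^'n"
  assumes spd: "spd A" and sc: "\<forall>i. solop A u $ i = 0 \<longrightarrow> \<bar>(u - A *v solop A u)$i\<bar> < 1"
  shows "solop A differentiable (at u)"
proof -
  define S where "S = solop A"
  define y where "y = S u"
  define q where "q = u - A *v y"
  have chy: "y$i * q$i = \<bar>y$i\<bar>" for i using solop_char(2)[OF spd, of u i] by (simp add: q_def y_def S_def)
  have chq: "\<bar>q$i\<bar> \<le> 1" for i using solop_char(1)[OF spd, of u i] by (simp add: q_def y_def S_def)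
  have sc': "y$i = 0 \<Longrightarrow> \<bar>q$i\<bar> < 1" for i using sc by (simp add: q_def y_def S_def)
  define P where "P x \<longleftrightarrow> (\<forall>i. (y$i \<noteq> 0 \<longrightarrow> S x $ i * y$i > 0) \<and> (y$i = 0 \<longrightarrow> \<bar>(x - A *v S x)$i\<bar> < 1))" for x
  have St: "(S \<longlongrightarrow> y) (nhds u)" unfolding S_def y_def by (rule solop_tendsto[OF spd])
  have ev: "eventually P (nhds u)"
    unfolding P_def
  proof (rule eventually_all_finite, intro eventually_conj)
    fix i
    show "\<forall>\<^sub>F x in nhds u. y $ i \<noteq> 0 \<longrightarrow> 0 < S x $ i * y $ i"
    proof (cases "y$i = 0")
      case True then show ?thesis by simp
    next
      case False
      have "((\<lambda>x. S x $ i * y$i) \<longlongrightarrow> y$i * y$i) (nhds u)"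
        by (intro tendsto_intros tendsto_vec_nth St)
      moreover have "y$i * y$i > 0" using False by (cases "y$i > 0") (simp_all add: mult_pos_pos mult_neg_neg)
      ultimately have "\<forall>\<^sub>F x in nhds u. 0 < S x $ i * y $ i" by (rule order_tendstoD(1))
      then show ?thesis by (rule eventually_mono) simp
    qed
    show "\<forall>\<^sub>F x in nhds u. y $ i = 0 \<longrightarrow> \<bar>(x - A *v S x) $ i\<bar> < 1"
    proof (cases "y$i = 0")
      case False then show ?thesis by simp
    next
      case True
      have "((\<lambda>x. x - A *v S x) \<longlongrightarrow> q) (nhds u)"
        unfolding q_def
        by (intro tendsto_diff filterlim_ident bounded_linear.tendsto[OF matrix_vector_mul_bounded_linear] St)
      then have "((\<lambda>x. \<bar>(x - A *v S x) $ i\<bar>) \<longlongrightarrow> \<bar>q$i\<bar>) (nhds u)"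
        by (intro tendsto_intros tendsto_vec_nth)
      then have "\<forall>\<^sub>F x in nhds u. \<bar>(x - A *v S x) $ i\<bar> < 1" using sc'[OF True] by (rule order_tendstoD(2))
      then show ?thesis by (rule eventually_mono) simp
    qed
  qed
  define R where "R h w \<longleftrightarrow> (\<forall>i. y$i = 0 \<longrightarrow> w$i = 0) \<and> (\<forall>i. y$i \<noteq> 0 \<longrightarrow> (A *v w)$i = h$i)" for h w :: "real^'n"
  have PR: "R (x - u) (S x - y)" if Px: "P x" for x
  proof -
    define y' where "y' = S x"
    define q' where "q' = x - A *v y'"
    have chy': "y'$i * q'$i = \<bar>y'$i\<bar>" for i using solop_char(2)[OF spd, of x i] by (simp add: q'_def y'_def S_def)
    have z: "y'$i = 0" if "y$i = 0" for i
    proof (rule ccontr)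
      assume nz: "y'$i \<noteq> 0"
      have "\<bar>y'$i\<bar> * \<bar>q'$i\<bar> = \<bar>y'$i\<bar>" using chy'[of i] abs_mult[of "y'$i" "q'$i"] by simp
      then have "\<bar>q'$i\<bar> = 1" using nz by simp
      moreover have "\<bar>q'$i\<bar> < 1" using Px that by (simp add: P_def q'_def y'_def)
      ultimately show False by simp
    qed
    have qq: "q'$i = q$i" if "y$i \<noteq> 0" for i
    proof -
      have pos: "y'$i * y$i > 0" using Px that by (simp add: P_def y'_def)
      show ?thesis
      proof (cases "y$i > 0")
        case True
        then have "y'$i > 0" using pos by (simp add: zero_less_mult_iff)
        then show ?thesis using sgn_q1[OF chy'] sgn_q1[OF chy True] by simp
      next
        case False
        then have yn: "y$i < 0" using that by simp
        then have "y'$i < 0" using pos by (simp add: zero_less_mult_iff)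
        then show ?thesis using sgn_q2[OF chy'] sgn_q2[OF chy yn] by simp
      qed
    qed
    show ?thesis unfolding R_def
    proof (intro conjI allI impI)
      fix i assume "y$i = 0" then show "(S x - y)$i = 0" using z[of i] by (simp add: y'_def)
    next
      fix i assume yi: "y$i \<noteq> 0"
      have "(A *v (S x - y))$i = (A *v y')$i - (A *v y)$i" by (simp add: y'_def matrix_vector_mult_diff_distrib)
      also have "\<dots> = (x$i - q'$i) - (u$i - q$i)" by (simp add: q'_def q_def)
      also have "\<dots> = (x - u)$i" using qq[OF yi] by simp
      finally show "(A *v (S x - y))$i = (x - u)$i" .
    qed
  qed
  have Runi: "w1 = w2" if "R h w1" "R h w2" for h w1 w2
  proof -
    define dd where "dd = w1 - w2"
    have "dd \<bullet> (A *v dd) = (\<Sum>i\<in>UNIV. dd$i * (A *v dd)$i)" by (simp add: inner_vec_def)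
    also have "\<dots> = 0"
    proof (rule sum.neutral, rule ballI)
      fix i
      show "dd$i * (A *v dd)$i = 0"
      proof (cases "y$i = 0")
        case True then show ?thesis using that by (simp add: R_def dd_def)
      next
        case False then show ?thesis using that by (simp add: R_def dd_def matrix_vector_mult_diff_distrib)
      qed
    qed
    finally have "dd \<bullet> (A *v dd) = 0" .
    then have "dd = 0" using spd unfolding spd_def by (metis less_irrefl)
    then show ?thesis by (simp add: dd_def)
  qed
  obtain \<delta> where \<delta>: "\<delta> > 0" "\<And>x. dist x u < \<delta> \<Longrightarrow> P x" using ev unfolding eventually_nhds_metric by blast
  have Rex: "\<exists>w. R h w" for h
  proof -
    define nh where "nh = norm h"
    have nh0: "nh \<ge> 0" by (simp add: nh_def)
    define t where "t = \<delta> / (2 * (nh + 1))"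
    have tpos: "t > 0" using \<delta>(1) nh0 by (simp add: t_def)
    have "t * nh < \<delta>"
    proof -
      have "t * nh \<le> t * (nh + 1)" using tpos by simp
      also have "\<dots> = \<delta> / 2"
      proof -
        have nz: "nh + 1 \<noteq> 0" using nh0 by linarith
        show ?thesis unfolding t_def using nz by (simp add: field_simps)
      qed
      finally show ?thesis using \<delta>(1) by simp
    qed
    then have "dist (u + t *\<^sub>R h) u < \<delta>" using tpos by (simp add: dist_norm nh_def)
    then have "R (t *\<^sub>R h) (S (u + t *\<^sub>R h) - y)" using PR \<delta>(2) by fastforce
    then have "R h ((1 / t) *\<^sub>R (S (u + t *\<^sub>R h) - y))"
      using tpos unfolding R_def by (simp add: matrix_vector_mult_scaleR)
    then show ?thesis by blast
  qed
  define L where "L h = (THE w. R h w)" for h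
  have RL: "R h (L h)" for h unfolding L_def using Rex[of h] Runi by (metis theI)
  have Leq: "R h w \<Longrightarrow> L h = w" for h w using RL Runi by blast
  have lin: "linear L"
  proof (rule linearI)
    fix b1 b2
    have "R (b1 + b2) (L b1 + L b2)" using RL[of b1] RL[of b2] unfolding R_def
      by (simp add: matrix_vector_right_distrib)
    then show "L (b1 + b2) = L b1 + L b2" by (rule Leq)
  next
    fix r b
    have "R (r *\<^sub>R b) (r *\<^sub>R L b)" using RL[of b] unfolding R_def by (simp add: matrix_vector_mult_scaleR)
    then show "L (r *\<^sub>R b) = r *\<^sub>R L b" by (rule Leq)
  qed
  then have bl: "bounded_linear L" by (simp add: linear_conv_bounded_linear)
  have "((\<lambda>x. L x + (y - L u)) has_derivative L) (at u)"
    by (intro has_derivative_add_const bounded_linear_imp_has_derivative bl)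
  moreover obtain U where U: "open U" "u \<in> U" "\<And>x. x \<in> U \<Longrightarrow> P x" using ev unfolding eventually_nhds by blast
  moreover have "L x + (y - L u) = S x" if "x \<in> U" for x
  proof -
    have "L (x - u) = S x - y" using Leq PR U(3)[OF that] by blast
    moreover have "L (x - u) = L x - L u" using lin by (simp add: linear_diff)
    ultimately show ?thesis by (simp add: algebra_simps)
  qed
  ultimately have "(S has_derivative L) (at u)"
    using has_derivative_transform_within_open[of _ L u UNIV U S] by auto
  then show ?thesis unfolding S_def by (rule differentiableI)
qed


theorem lemma4p1:
  fixes A :: "real ^ 'n ^ 'n" and u :: "real ^ 'n"
  assumes "spd A"
  shows "solop A differentiable (at u) \<longleftrightarrow>
         critcone (solop A u) (u - A *v solop A u) = {v. \<forall>i. solop A u $ i = 0 \<longrightarrow> v $ i = 0}"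
proof -
  have c: "critcone (solop A u) (u - A *v solop A u) = {v. \<forall>i. solop A u $ i = 0 \<longrightarrow> v $ i = 0}
     \<longleftrightarrow> (\<forall>i. solop A u $ i = 0 \<longrightarrow> \<bar>(u - A *v solop A u)$i\<bar> < 1)"
    by (rule cone_iff[OF solop_char(1)[OF assms] solop_char(2)[OF assms]])
  have "solop A differentiable (at u) \<longleftrightarrow> (\<forall>i. solop A u $ i = 0 \<longrightarrow> \<bar>(u - A *v solop A u)$i\<bar> < 1)"
    using diff_imp_sc[OF assms] sc_imp_diff[OF assms] by blast
  then show ?thesis using c by simp
qed

end
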